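(* Let $p\in\{1,2\}$, let $\Omega\subset\mathbb{R}^n$ be a domain, $\mathcal{S}$ any basis of shapes in $\Omega$, $S\in\mathcal{S}$, and $f_1,f_2$ real-valued functions in $\mathrm{BMO}^p_{\mathcal{S}}(\Omega)$. If $f=\max(f_1,f_2)$ or $f=\min(f_1,f_2)$, then $$\frac1{|S|}\int_S|f-f_S|^p\le\frac1{|S|}\int_S|f_1-(f_1)_S|^p+\frac1{|S|}\int_S|f_2-(f_2)_S|^p.$$ Consequently $\|\max(f_1,f_2)\|_{\mathrm{BMO}^p_{\mathcal{S}}}\le\|f_1\|_{\mathrm{BMO}^p_{\mathcal{S}}}+\|f_2\|_{\mathrm{BMO}^p_{\mathcal{S}}}$ and $\|\min(f_1,f_2)\|_{\mathrm{BMO}^p_{\mathcal{S}}}\le\|f_1\|_{\mathrm{BMO}^p_{\mathcal{S}}}+\|f_2\|_{\mathrm{BMO}^p_{\mathcal{S}}}$.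
   Context: A domain is an open connected set. A shape is an open set with $0<|S|<\infty$; a basis of shapes in $\Omega$ is a collection of shapes contained in $\Omega$ covering $\Omega$. For $f\in L^1(S)$, $f_S=\frac1{|S|}\int_Sf$. $\mathrm{BMO}^p_{\mathcal{S}}(\Omega)$ is the space of $f$ with $f\in L^1(S)$ for all $S\in\mathcal{S}$ and $\|f\|_{\mathrm{BMO}^p_{\mathcal{S}}}:=\sup_{S\in\mathcal{S}}\big(\frac1{|S|}\int_S|f-f_S|^p\big)^{1/p}<\infty$. *)

theory Defs
  imports "HOL-Analysis.Analysis"
begin

definition domain :: "'a::topological_space set \<Rightarrow> bool" where
  "domain \<Omega> \<longleftrightarrow> open \<Omega> \<and> connected \<Omega>"

definition shape :: "'a::euclidean_space set \<Rightarrow> bool" where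
  "shape S \<longleftrightarrow> open S \<and> 0 < emeasure lebesgue S \<and> emeasure lebesgue S < \<infinity>"

definition basis_of_shapes :: "'a::euclidean_space set \<Rightarrow> 'a set set \<Rightarrow> bool" where
  "basis_of_shapes \<Omega> \<S> \<longleftrightarrow> (\<forall>S\<in>\<S>. shape S \<and> S \<subseteq> \<Omega>) \<and> \<Union>\<S> = \<Omega>"

definition avg :: "'a::euclidean_space set \<Rightarrow> ('a \<Rightarrow> real) \<Rightarrow> real" where
  "avg S f = (LINT x:S|lebesgue. f x) / measure lebesgue S"

definition mean_osc :: "real \<Rightarrow> 'a::euclidean_space set \<Rightarrow> ('a \<Rightarrow> real) \<Rightarrow> real" where
  "mean_osc p S f = avg S (\<lambda>x. \<bar>f x - avg S f\<bar> powr p)"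

definition in_BMO :: "real \<Rightarrow> 'a::euclidean_space set set \<Rightarrow> ('a \<Rightarrow> real) \<Rightarrow> bool" where
  "in_BMO p \<S> f \<longleftrightarrow>
     (\<forall>S\<in>\<S>. set_integrable lebesgue S f
              \<and> set_integrable lebesgue S (\<lambda>x. \<bar>f x - avg S f\<bar> powr p))
     \<and> bdd_above ((\<lambda>S. mean_osc p S f) ` \<S>)"

definition BMO_norm :: "real \<Rightarrow> 'a::euclidean_space set set \<Rightarrow> ('a \<Rightarrow> real) \<Rightarrow> real" where
  "BMO_norm p \<S> f = (SUP S\<in>\<S>. mean_osc p S f) powr (1 / p)"

end

theory Submission
  imports Defs
begin

definition avgM :: "'a measure \<Rightarrow> ('a \<Rightarrow> real) \<Rightarrow> real" where
  "avgM M f = integral\<^sup>L M f / measure M (space M)"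

definition oscM :: "real \<Rightarrow> 'a measure \<Rightarrow> ('a \<Rightarrow> real) \<Rightarrow> real" where
  "oscM p M f = avgM M (\<lambda>x. \<bar>f x - avgM M f\<bar> powr p)"

lemma oscM_eq: "oscM p M f = integral\<^sup>L M (\<lambda>x. \<bar>f x - avgM M f\<bar> powr p) / measure M (space M)"
  unfolding oscM_def by (rule avgM_def)

lemma int_centered:
  assumes "finite_measure M" "integrable M f"
  shows "integral\<^sup>L M (\<lambda>x. f x - c) = integral\<^sup>L M f - c * measure M (space M)"
proof -
  interpret finite_measure M by fact
  have "integral\<^sup>L M (\<lambda>x. f x - c) = integral\<^sup>L M f - integral\<^sup>L M (\<lambda>x. c)"
    using assms by (intro Bochner_Integration.integral_diff) auto
  then show ?thesis by simp
qed

lemma int_centered_zero: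
  assumes "finite_measure M" "integrable M f" "0 < measure M (space M)"
  shows "integral\<^sup>L M (\<lambda>x. f x - avgM M f) = 0"
  using int_centered[OF assms(1,2)] assms(3) by (simp add: avgM_def)

lemma abs_pos_part:
  fixes W :: "'a \<Rightarrow> real"
  assumes "integrable M W" "integral\<^sup>L M W = 0"
  shows "integral\<^sup>L M (\<lambda>x. \<bar>W x\<bar>) = 2 * integral\<^sup>L M (\<lambda>x. max (W x) 0)"
proof -
  have i: "integrable M (\<lambda>x. max (W x) 0)" using assms by auto
  have "integral\<^sup>L M (\<lambda>x. \<bar>W x\<bar>) = integral\<^sup>L M (\<lambda>x. 2 * max (W x) 0 - W x)"
    by (rule Bochner_Integration.integral_cong) auto
  also have "\<dots> = 2 * integral\<^sup>L M (\<lambda>x. max (W x) 0) - integral\<^sup>L M W"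
    using i assms by simp
  finally show ?thesis using assms by simp
qed

lemma key_max:
  fixes X Y :: "'a \<Rightarrow> real"
  assumes fm: "finite_measure M" and pos: "0 < measure M (space M)" and p: "p \<in> {1,2}"
    and iX: "integrable M X" and iY: "integrable M Y"
    and iX2: "integrable M (\<lambda>x. \<bar>X x - avgM M X\<bar> powr p)"
    and iY2: "integrable M (\<lambda>x. \<bar>Y x - avgM M Y\<bar> powr p)"
  shows "oscM p M (\<lambda>x. max (X x) (Y x)) \<le> oscM p M X + oscM p M Y"
proof -
  interpret finite_measure M by fact
  define \<mu> where "\<mu> = measure M (space M)"
  define a where "a = avgM M X"
  define b where "b = avgM M Y"
  define Z where "Z = (\<lambda>x. max (X x) (Y x))"
  define m where "m = avgM M Z"
  define c where "c = max a b"
  have mX: "X \<in> borel_measurable M" using iX by auto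
  have mY: "Y \<in> borel_measurable M" using iY by auto
  have iZ: "integrable M Z" unfolding Z_def using iX iY by auto
  have am: "a \<le> m"
  proof -
    have "integral\<^sup>L M X \<le> integral\<^sup>L M Z"
      using iX iZ by (intro integral_mono) (auto simp: Z_def)
    then show ?thesis unfolding a_def m_def avgM_def using pos by (simp add: divide_right_mono)
  qed
  have bm: "b \<le> m"
  proof -
    have "integral\<^sup>L M Y \<le> integral\<^sup>L M Z"
      using iY iZ by (intro integral_mono) (auto simp: Z_def)
    then show ?thesis unfolding b_def m_def avgM_def using pos by (simp add: divide_right_mono)
  qed
  have cm: "c \<le> m" using am bm by (simp add: c_def)
  show ?thesis
  proof (cases "p = 1")
    case True
    have eX: "integral\<^sup>L M (\<lambda>x. \<bar>X x - a\<bar>) = 2 * integral\<^sup>L M (\<lambda>x. max (X x - a) 0)"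
      by (rule abs_pos_part[where W="\<lambda>x. X x - a"]) (use iX int_centered_zero[OF fm iX pos] in \<open>auto simp: a_def\<close>)
    have eY: "integral\<^sup>L M (\<lambda>x. \<bar>Y x - b\<bar>) = 2 * integral\<^sup>L M (\<lambda>x. max (Y x - b) 0)"
      by (rule abs_pos_part[where W="\<lambda>x. Y x - b"]) (use iY int_centered_zero[OF fm iY pos] in \<open>auto simp: b_def\<close>)
    have eZ: "integral\<^sup>L M (\<lambda>x. \<bar>Z x - m\<bar>) = 2 * integral\<^sup>L M (\<lambda>x. max (Z x - m) 0)"
      by (rule abs_pos_part[where W="\<lambda>x. Z x - m"]) (use iZ int_centered_zero[OF fm iZ pos] in \<open>auto simp: m_def\<close>)
    have "integral\<^sup>L M (\<lambda>x. max (Z x - m) 0) \<le> integral\<^sup>L M (\<lambda>x. max (X x - a) 0 + max (Y x - b) 0)"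
    proof (rule integral_mono)
      show "integrable M (\<lambda>x. max (Z x - m) 0)" using iZ by auto
      show "integrable M (\<lambda>x. max (X x - a) 0 + max (Y x - b) 0)" using iX iY by auto
      fix x show "max (Z x - m) 0 \<le> max (X x - a) 0 + max (Y x - b) 0"
        using am bm by (auto simp: Z_def)
    qed
    also have "\<dots> = integral\<^sup>L M (\<lambda>x. max (X x - a) 0) + integral\<^sup>L M (\<lambda>x. max (Y x - b) 0)"
      using iX iY by (intro Bochner_Integration.integral_add) auto
    finally have "integral\<^sup>L M (\<lambda>x. \<bar>Z x - m\<bar>) \<le> integral\<^sup>L M (\<lambda>x. \<bar>X x - a\<bar>) + integral\<^sup>L M (\<lambda>x. \<bar>Y x - b\<bar>)"
      using eX eY eZ by linarith
    then show ?thesis using True pos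
      unfolding oscM_eq a_def[symmetric] b_def[symmetric] m_def[symmetric] Z_def[symmetric]
      by (simp add: add_divide_distrib[symmetric] divide_right_mono)
  next
    case False
    then have p2: "p = 2" using p by auto
    have sq: "\<And>t::real. \<bar>t\<bar> powr 2 = t\<^sup>2" by simp
    have iX2': "integrable M (\<lambda>x. (X x - a)\<^sup>2)" using iX2 p2 by (simp add: a_def)
    have iY2': "integrable M (\<lambda>x. (Y x - b)\<^sup>2)" using iY2 p2 by (simp add: b_def)
    have ptw: "(Z x - c)\<^sup>2 \<le> (X x - a)\<^sup>2 + (Y x - b)\<^sup>2" for x
    proof -
      have "\<bar>Z x - c\<bar> \<le> max \<bar>X x - a\<bar> \<bar>Y x - b\<bar>" by (auto simp: Z_def c_def)
      then have "(Z x - c)\<^sup>2 \<le> (max \<bar>X x - a\<bar> \<bar>Y x - b\<bar>)\<^sup>2"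
        by (metis abs_ge_zero power2_abs power_mono)
      also have "\<dots> \<le> (X x - a)\<^sup>2 + (Y x - b)\<^sup>2"
        by (cases "\<bar>X x - a\<bar> \<le> \<bar>Y x - b\<bar>") (auto simp: max_def)
      finally show ?thesis .
    qed
    have iZc: "integrable M (\<lambda>x. (Z x - c)\<^sup>2)"
    proof (rule Bochner_Integration.integrable_bound[OF Bochner_Integration.integrable_add[OF iX2' iY2']])
      show "(\<lambda>x. (Z x - c)\<^sup>2) \<in> borel_measurable M" using mX mY unfolding Z_def by measurable
      show "AE x in M. norm ((Z x - c)\<^sup>2) \<le> norm ((X x - a)\<^sup>2 + (Y x - b)\<^sup>2)"
        using ptw by (auto intro!: AE_I2)
    qed
    have eq: "(Z x - m)\<^sup>2 = (Z x - c)\<^sup>2 - 2 * (m - c) * (Z x - m) - (m - c)\<^sup>2" for x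
      by (simp add: power2_eq_square algebra_simps)
    have iZm: "integrable M (\<lambda>x. (Z x - c)\<^sup>2 - 2 * (m - c) * (Z x - m) - (m - c)\<^sup>2)"
      using iZc iZ by auto
    have "integral\<^sup>L M (\<lambda>x. (Z x - m)\<^sup>2) = integral\<^sup>L M (\<lambda>x. (Z x - c)\<^sup>2 - 2 * (m - c) * (Z x - m) - (m - c)\<^sup>2)"
      by (simp only: eq)
    also have "\<dots> = integral\<^sup>L M (\<lambda>x. (Z x - c)\<^sup>2) - 2 * (m - c) * integral\<^sup>L M (\<lambda>x. Z x - m) - (m - c)\<^sup>2 * \<mu>"
      using iZc iZ by (simp add: \<mu>_def)
    also have "\<dots> = integral\<^sup>L M (\<lambda>x. (Z x - c)\<^sup>2) - (m - c)\<^sup>2 * \<mu>"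
      using int_centered_zero[OF fm iZ pos] by (simp add: m_def)
    also have "\<dots> \<le> integral\<^sup>L M (\<lambda>x. (Z x - c)\<^sup>2)"
      using pos by (simp add: \<mu>_def)
    also have "\<dots> \<le> integral\<^sup>L M (\<lambda>x. (X x - a)\<^sup>2 + (Y x - b)\<^sup>2)"
      using iZc iX2' iY2' ptw by (intro integral_mono) auto
    also have "\<dots> = integral\<^sup>L M (\<lambda>x. (X x - a)\<^sup>2) + integral\<^sup>L M (\<lambda>x. (Y x - b)\<^sup>2)"
      using iX2' iY2' by simp
    finally have "integral\<^sup>L M (\<lambda>x. (Z x - m)\<^sup>2) \<le> integral\<^sup>L M (\<lambda>x. (X x - a)\<^sup>2) + integral\<^sup>L M (\<lambda>x. (Y x - b)\<^sup>2)" .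
    then show ?thesis using p2 pos
      unfolding oscM_eq a_def[symmetric] b_def[symmetric] m_def[symmetric] Z_def[symmetric]
      by (simp add: add_divide_distrib[symmetric] divide_right_mono)
  qed
qed

lemma avgM_neg: "avgM M (\<lambda>x. - f x) = - avgM M f"
  by (simp add: avgM_def)

lemma oscM_neg: "oscM p M (\<lambda>x. - f x) = oscM p M f"
proof -
  have "(\<lambda>x. \<bar>- f x - avgM M (\<lambda>x. - f x)\<bar> powr p) = (\<lambda>x. \<bar>f x - avgM M f\<bar> powr p)"
    by (rule ext) (simp add: avgM_neg abs_minus_commute)
  then show ?thesis unfolding oscM_def by simp
qed

lemma key_min:
  fixes X Y :: "'a \<Rightarrow> real"
  assumes fm: "finite_measure M" and pos: "0 < measure M (space M)" and p: "p \<in> {1,2}"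
    and iX: "integrable M X" and iY: "integrable M Y"
    and iX2: "integrable M (\<lambda>x. \<bar>X x - avgM M X\<bar> powr p)"
    and iY2: "integrable M (\<lambda>x. \<bar>Y x - avgM M Y\<bar> powr p)"
  shows "oscM p M (\<lambda>x. min (X x) (Y x)) \<le> oscM p M X + oscM p M Y"
proof -
  have e: "(\<lambda>x. \<bar>- X x - avgM M (\<lambda>x. - X x)\<bar> powr p) = (\<lambda>x. \<bar>X x - avgM M X\<bar> powr p)"
    "(\<lambda>x. \<bar>- Y x - avgM M (\<lambda>x. - Y x)\<bar> powr p) = (\<lambda>x. \<bar>Y x - avgM M Y\<bar> powr p)"
    by (auto simp: avgM_neg abs_minus_commute)
  have "oscM p M (\<lambda>x. max (- X x) (- Y x)) \<le> oscM p M (\<lambda>x. - X x) + oscM p M (\<lambda>x. - Y x)"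
    apply (rule key_max[OF fm pos p])
    using iX iY iX2 iY2 by (simp_all only: e integrable_minus)
  moreover have "(\<lambda>x. min (X x) (Y x)) = (\<lambda>x. - max (- X x) (- Y x))" by (rule ext) simp
  ultimately show ?thesis
    by (simp only: oscM_neg)
qed

lemma bridge:
  fixes S :: "'a::euclidean_space set"
  assumes "S \<in> sets lebesgue"
  shows "avg S f = avgM (restrict_space lebesgue S) f"
    "mean_osc p S f = oscM p (restrict_space lebesgue S) f"
    "set_integrable lebesgue S f \<longleftrightarrow> integrable (restrict_space lebesgue S) f"
    "measure (restrict_space lebesgue S) (space (restrict_space lebesgue S)) = measure lebesgue S"
proof -
  have S: "S \<inter> space lebesgue \<in> sets lebesgue" using assms by simp
  have m: "measure (restrict_space lebesgue S) (space (restrict_space lebesgue S)) = measure lebesgue S"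
    using measure_restrict_space[OF S, of S] by (simp add: space_restrict_space)
  then show "measure (restrict_space lebesgue S) (space (restrict_space lebesgue S)) = measure lebesgue S" .
  show a: "avg S f = avgM (restrict_space lebesgue S) f" for f
    unfolding avg_def avgM_def m set_lebesgue_integral_def integral_restrict_space[OF S] ..
  show "mean_osc p S f = oscM p (restrict_space lebesgue S) f"
    unfolding mean_osc_def oscM_def a ..
  show "set_integrable lebesgue S f \<longleftrightarrow> integrable (restrict_space lebesgue S) f"
    unfolding set_integrable_def integrable_restrict_space[OF S] ..
qed

lemma oscM_nonneg: "0 \<le> oscM p M f"
  unfolding oscM_eq by (intro divide_nonneg_nonneg Bochner_Integration.integral_nonneg) auto

lemma norm_part:
  fixes \<S> :: "'a::euclidean_space set set"
  assumes ne: "\<S> \<noteq> {}" and p: "p \<in> {1,2}"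
    and nn: "\<And>T f. T \<in> \<S> \<Longrightarrow> 0 \<le> mean_osc p T f"
    and b1: "bdd_above ((\<lambda>S. mean_osc p S f1) ` \<S>)"
    and b2: "bdd_above ((\<lambda>S. mean_osc p S f2) ` \<S>)"
    and le: "\<And>T. T \<in> \<S> \<Longrightarrow> mean_osc p T h \<le> mean_osc p T f1 + mean_osc p T f2"
  shows "BMO_norm p \<S> h \<le> BMO_norm p \<S> f1 + BMO_norm p \<S> f2"
proof -
  define A1 where "A1 = (SUP S\<in>\<S>. mean_osc p S f1)"
  define A2 where "A2 = (SUP S\<in>\<S>. mean_osc p S f2)"
  define B where "B = (SUP S\<in>\<S>. mean_osc p S h)"
  obtain T where T: "T \<in> \<S>" using ne by auto
  have u1: "mean_osc p S f1 \<le> A1" if "S \<in> \<S>" for S unfolding A1_def using b1 that by (rule cSUP_upper2) simp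
  have u2: "mean_osc p S f2 \<le> A2" if "S \<in> \<S>" for S unfolding A2_def using b2 that by (rule cSUP_upper2) simp
  have hb: "mean_osc p S h \<le> A1 + A2" if "S \<in> \<S>" for S using le[OF that] u1[OF that] u2[OF that] by linarith
  have BA: "B \<le> A1 + A2" unfolding B_def using ne hb by (rule cSUP_least)
  have A1p: "0 \<le> A1" using nn[OF T] u1[OF T] by (meson order_trans)
  have A2p: "0 \<le> A2" using nn[OF T] u2[OF T] by (meson order_trans)
  have bh: "bdd_above ((\<lambda>S. mean_osc p S h) ` \<S>)" using hb by (intro bdd_aboveI2) 
  have Bp: "0 \<le> B" unfolding B_def using bh T nn[OF T] by (rule cSUP_upper2)
  show ?thesis
  proof (cases "p = 1")
    case True
    then show ?thesis using BA A1p A2p Bp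
      unfolding BMO_norm_def A1_def[symmetric] A2_def[symmetric] B_def[symmetric] by simp
  next
    case False
    then have p2: "p = 2" using p by auto
    have "sqrt B \<le> sqrt (A1 + A2)" using BA by simp
    also have "\<dots> \<le> sqrt A1 + sqrt A2" using A1p A2p by (rule sqrt_add_le_add_sqrt)
    finally show ?thesis using p2 A1p A2p Bp
      unfolding BMO_norm_def A1_def[symmetric] A2_def[symmetric] B_def[symmetric]
      by (simp add: powr_half_sqrt)
  qed
qed

theorem proposition6p2:
  fixes p :: real and \<Omega> :: "(real ^ 'n) set" and \<S> :: "(real ^ 'n) set set"
    and S :: "(real ^ 'n) set" and f1 f2 :: "real ^ 'n \<Rightarrow> real"
  assumes "p \<in> {1, 2}"
    and "domain \<Omega>"
    and "basis_of_shapes \<Omega> \<S>"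
    and "S \<in> \<S>"
    and "in_BMO p \<S> f1" and "in_BMO p \<S> f2"
  shows "mean_osc p S (\<lambda>x. max (f1 x) (f2 x)) \<le> mean_osc p S f1 + mean_osc p S f2
       \<and> mean_osc p S (\<lambda>x. min (f1 x) (f2 x)) \<le> mean_osc p S f1 + mean_osc p S f2
       \<and> BMO_norm p \<S> (\<lambda>x. max (f1 x) (f2 x)) \<le> BMO_norm p \<S> f1 + BMO_norm p \<S> f2
       \<and> BMO_norm p \<S> (\<lambda>x. min (f1 x) (f2 x)) \<le> BMO_norm p \<S> f1 + BMO_norm p \<S> f2"
proof -
  note p = assms(1)
  have props: "T \<in> sets lebesgue \<and> finite_measure (restrict_space lebesgue T) \<and> 0 < measure lebesgue T"
    if "T \<in> \<S>" for T
  proof -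
    have sh: "shape T" using assms(3) that by (auto simp: basis_of_shapes_def)
    then have o: "open T" and e1: "0 < emeasure lebesgue T" and e2: "emeasure lebesgue T < \<infinity>"
      by (auto simp: shape_def)
    have Ts: "T \<in> sets lebesgue" using o by simp
    have "finite_measure (restrict_space lebesgue T)"
      by (rule finite_measureI) (use e2 Ts in \<open>simp add: emeasure_restrict_space space_restrict_space\<close>)
    moreover have "0 < measure lebesgue T" using e1 e2 by (simp add: measure_def enn2real_positive_iff)
    ultimately show ?thesis using Ts by simp
  qed
  have both: "mean_osc p T (\<lambda>x. max (f1 x) (f2 x)) \<le> mean_osc p T f1 + mean_osc p T f2
     \<and> mean_osc p T (\<lambda>x. min (f1 x) (f2 x)) \<le> mean_osc p T f1 + mean_osc p T f2"
    if T: "T \<in> \<S>" for T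
  proof -
    have Ts: "T \<in> sets lebesgue" and fm: "finite_measure (restrict_space lebesgue T)"
      and pos0: "0 < measure lebesgue T" using props[OF T] by auto
    note br = bridge[OF Ts]
    have pos: "0 < measure (restrict_space lebesgue T) (space (restrict_space lebesgue T))"
      using pos0 br(4) by simp
    have i1: "integrable (restrict_space lebesgue T) f1"
      "integrable (restrict_space lebesgue T) (\<lambda>x. \<bar>f1 x - avgM (restrict_space lebesgue T) f1\<bar> powr p)"
    proof -
      have "set_integrable lebesgue T f1 \<and> set_integrable lebesgue T (\<lambda>x. \<bar>f1 x - avg T f1\<bar> powr p)"
        using assms(5) T by (auto simp: in_BMO_def)
      then show "integrable (restrict_space lebesgue T) f1"
        "integrable (restrict_space lebesgue T) (\<lambda>x. \<bar>f1 x - avgM (restrict_space lebesgue T) f1\<bar> powr p)"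
        by (simp_all only: br(3) br(1))
    qed
    have i2: "integrable (restrict_space lebesgue T) f2"
      "integrable (restrict_space lebesgue T) (\<lambda>x. \<bar>f2 x - avgM (restrict_space lebesgue T) f2\<bar> powr p)"
    proof -
      have "set_integrable lebesgue T f2 \<and> set_integrable lebesgue T (\<lambda>x. \<bar>f2 x - avg T f2\<bar> powr p)"
        using assms(6) T by (auto simp: in_BMO_def)
      then show "integrable (restrict_space lebesgue T) f2"
        "integrable (restrict_space lebesgue T) (\<lambda>x. \<bar>f2 x - avgM (restrict_space lebesgue T) f2\<bar> powr p)"
        by (simp_all only: br(3) br(1))
    qed
    show ?thesis unfolding br(2)
      using key_max[OF fm pos p i1(1) i2(1) i1(2) i2(2)] key_min[OF fm pos p i1(1) i2(1) i1(2) i2(2)] by simp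
  qed
  have ne: "\<S> \<noteq> {}" using assms(4) by auto
  have nn: "0 \<le> mean_osc p T f" if "T \<in> \<S>" for T f
    using props[OF that] bridge(2) oscM_nonneg by metis
  have b1: "bdd_above ((\<lambda>S. mean_osc p S f1) ` \<S>)" using assms(5) by (simp add: in_BMO_def)
  have b2: "bdd_above ((\<lambda>S. mean_osc p S f2) ` \<S>)" using assms(6) by (simp add: in_BMO_def)
  show ?thesis
    using both[OF assms(4)] norm_part[OF ne p nn b1 b2, of "\<lambda>x. max (f1 x) (f2 x)"]
      norm_part[OF ne p nn b1 b2, of "\<lambda>x. min (f1 x) (f2 x)"] both by blast
qed

end
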